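(* Let $n=2k$ be a positive even integer. Let $f_1,f_2,f_3$ be three pairwise distinct bent Boolean functions on $\mathbb{F}_{2^n}$ such that $f_4:=f_1+f_2+f_3$ is also bent, and let $\sigma=f_1f_2+f_1f_3+f_2f_3$. Then: 1) $\sigma$ is bent if and only if $f_1^*+f_2^*+f_3^*+f_4^*=0$; and if $\sigma$ is bent, then $\sigma^*=f_1^*f_2^*+f_1^*f_3^*+f_2^*f_3^*$; 2) $\sigma$ is semi-bent if and only if $f_1^*+f_2^*+f_3^*+f_4^*=1$ (the constant function $1$); 3) otherwise (i.e. $f_1^*+f_2^*+f_3^*+f_4^*$ is not constant), $\{|W_\sigma(\lambda)| : \lambda\in\mathbb{F}_{2^n}\}=\{0,2^k,2^{k+1}\}$.
   Context: A Boolean function on $\mathbb{F}_{2^n}$ is a map $f:\mathbb{F}_{2^n}\to\mathbb{F}_2$. Its Walsh transform is $W_f(a)=\sum_{x\in\mathbb{F}_{2^n}}(-1)^{f(x)+\mathrm{Tr}^n_1(ax)}$, where $\mathrm{Tr}^n_1(x)=\sum_{i=0}^{n-1}x^{2^i}$. $f$ is bent if $|W_f(a)|=2^{n/2}$ for all $a$; then its dual $f^*$ is the Boolean function with $W_f(a)=2^{n/2}(-1)^{f^*(a)}$. For $n$ even, $f$ is semi-bent if $W_f$ takes values in $\{0,\pm 2^{n/2+1}\}$. Sums of Boolean functions are taken modulo 2. *)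

theory Defs
  imports Main
begin

text \<open>The field F_{2^n} is modelled by an arbitrary finite field type 'a with
  CARD('a) = 2^n (unique up to isomorphism). Boolean functions are maps 'a => bool,
  with True representing 1 in F_2; addition mod 2 is exclusive or, product is conjunction.\<close>

definition tr :: "nat \<Rightarrow> 'a::{field,finite} \<Rightarrow> 'a" where
  "tr n x = (\<Sum>i<n. x ^ (2 ^ i))"

definition walsh :: "nat \<Rightarrow> ('a::{field,finite} \<Rightarrow> bool) \<Rightarrow> 'a \<Rightarrow> int" where
  "walsh n f a = (\<Sum>x\<in>UNIV. (if f x then -1 else 1) * (if tr n (a * x) = 0 then 1 else -1))"

definition bent :: "nat \<Rightarrow> ('a::{field,finite} \<Rightarrow> bool) \<Rightarrow> bool" where
  "bent n f \<longleftrightarrow> (\<forall>a. \<bar>walsh n f a\<bar> = 2 ^ (n div 2))"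

text \<open>Dual of a bent function: W_f(a) = 2^{n/2} (-1)^{f^*(a)}.\<close>
definition dual :: "nat \<Rightarrow> ('a::{field,finite} \<Rightarrow> bool) \<Rightarrow> 'a \<Rightarrow> bool" where
  "dual n f a \<longleftrightarrow> walsh n f a = - (2 ^ (n div 2))"

definition semibent :: "nat \<Rightarrow> ('a::{field,finite} \<Rightarrow> bool) \<Rightarrow> bool" where
  "semibent n f \<longleftrightarrow> (\<forall>a. walsh n f a \<in> {0, 2 ^ (n div 2 + 1), - (2 ^ (n div 2 + 1))})"

definition bxor :: "('a \<Rightarrow> bool) \<Rightarrow> ('a \<Rightarrow> bool) \<Rightarrow> 'a \<Rightarrow> bool" where
  "bxor f g = (\<lambda>x. f x \<noteq> g x)"

definition bmul :: "('a \<Rightarrow> bool) \<Rightarrow> ('a \<Rightarrow> bool) \<Rightarrow> 'a \<Rightarrow> bool" where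
  "bmul f g = (\<lambda>x. f x \<and> g x)"

end

theory Submission
  imports Defs "HOL-Computational_Algebra.Polynomial"
begin

lemma card_zero_field: "of_nat (card (UNIV::'a set)) = (0::'a::{field,finite})"
proof -
  have "(\<Sum>x\<in>UNIV. x + 1) = (\<Sum>x\<in>UNIV. (x::'a))"
    by (rule sum.reindex_bij_witness[of _ "\<lambda>x. x - 1" "\<lambda>x. x + 1"]) auto
  moreover have "(\<Sum>x\<in>UNIV. x + 1) = (\<Sum>x\<in>UNIV. (x::'a)) + of_nat (card (UNIV::'a set))"
    by (simp add: sum.distrib)
  ultimately show ?thesis by simp
qed

lemma char2:
  assumes "card (UNIV::'a::{field,finite} set) = 2 ^ m"
  shows "(1::'a) + 1 = 0"
proof -
  have "(2::'a) ^ m = 0" using card_zero_field[where 'a='a] assms by simp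
  hence "(2::'a) = 0" by simp
  thus ?thesis by simp
qed

lemma add_self0:
  assumes "(1::'a::field) + 1 = 0" shows "(x::'a) + x = 0"
proof -
  have "x + x = x * (1 + 1)" by (simp add: algebra_simps)
  thus ?thesis using assms by simp
qed

lemma frob2:
  assumes "(1::'a::field) + 1 = 0" shows "((x::'a) + y) ^ 2 = x ^ 2 + y ^ 2"
proof -
  have "(x + y) ^ 2 = x^2 + y^2 + (x*y + x*y)" by (simp add: power2_eq_square algebra_simps)
  thus ?thesis using add_self0[OF assms] by simp
qed

lemma frob:
  assumes "(1::'a::field) + 1 = 0" shows "((x::'a) + y) ^ (2^i) = x ^ (2^i) + y ^ (2^i)"
proof (induction i)
  case 0 then show ?case by simp
next
  case (Suc i)
  have "(x + y) ^ (2 ^ Suc i) = ((x+y) ^ (2^i)) ^ 2" by (simp add: power_mult[symmetric] mult.commute)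
  also have "\<dots> = (x ^ (2^i)) ^ 2 + (y ^ (2^i))^2" using Suc frob2[OF assms] by simp
  also have "\<dots> = x ^ (2 ^ Suc i) + y ^ (2 ^ Suc i)" by (simp add: power_mult[symmetric] mult.commute)
  finally show ?case .
qed

lemma tr_add:
  assumes "(1::'a::{field,finite}) + 1 = 0" shows "tr n ((x::'a) + y) = tr n x + tr n y"
  unfolding tr_def by (simp add: frob[OF assms] sum.distrib)

lemma sum_sq_char2:
  assumes "(1::'a::field) + 1 = 0" shows "(\<Sum>i<(m::nat). (g i::'a)) ^ 2 = (\<Sum>i<m. g i ^ 2)"
  by (induction m) (simp_all add: frob2[OF assms])

lemma fermat:
  "(x::'a::{field,finite}) ^ card (UNIV::'a set) = x"
proof (cases "x = 0")
  case True then show ?thesis by (simp add: card_gt_0_iff)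
next
  case False
  let ?S = "UNIV - {0::'a}"
  have "(\<Prod>y\<in>?S. x * y) = (\<Prod>y\<in>?S. y)"
    by (rule prod.reindex_bij_witness[of _ "\<lambda>y. y / x" "\<lambda>y. x * y"]) (use False in auto)
  moreover have "(\<Prod>y\<in>?S. x * y) = x ^ card ?S * (\<Prod>y\<in>?S. y)"
    by (simp add: prod.distrib)
  moreover have "(\<Prod>y\<in>?S. y) \<noteq> 0" by simp
  ultimately have "x ^ card ?S = 1" by simp
  moreover have "card ?S = card (UNIV::'a set) - 1" by (simp add: card_Diff_singleton)
  moreover have "card (UNIV::'a set) \<ge> 1" by (simp add: Suc_leI card_gt_0_iff)
  ultimately have h: "card (UNIV::'a set) = Suc (card ?S)" "x ^ card ?S = 1" by auto
  have "x ^ card (UNIV::'a set) = x * x ^ card ?S" by (subst h(1)) simp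
  thus ?thesis using h(2) by simp
qed

lemma tr_sq:
  assumes "card (UNIV::'a::{field,finite} set) = 2 ^ n"
  shows "tr n (x::'a) ^ 2 = tr n x"
proof -
  note c = char2[OF assms]
  have e0: "tr n x ^ 2 = (\<Sum>i<n. x ^ (2 ^ Suc i))"
    unfolding tr_def sum_sq_char2[OF c] by (simp add: power_mult[symmetric] mult.commute)
  have e1: "(\<Sum>i<Suc n. x ^ (2 ^ i)) = x + (\<Sum>i<n. x ^ (2 ^ Suc i))"
    by (subst sum.lessThan_Suc_shift) simp
  have e2: "(\<Sum>i<Suc n. x ^ (2 ^ i)) = tr n x + x"
  proof -
    have "x ^ (2 ^ n) = x" using fermat[of x] unfolding assms .
    thus ?thesis by (simp add: tr_def)
  qed
  show ?thesis proof -
    have "x + (\<Sum>i<n. x ^ (2 ^ Suc i)) = tr n x + x" using e1 e2 by simp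
    hence "(\<Sum>i<n. x ^ (2 ^ Suc i)) = tr n x" by (simp add: add.commute)
    thus ?thesis using e0 by simp
  qed
qed

lemma tr01:
  assumes "card (UNIV::'a::{field,finite} set) = 2 ^ n"
  shows "tr n (x::'a) = 0 \<or> tr n x = 1"
proof -
  have "tr n x * (tr n x - 1) = 0" using tr_sq[OF assms, of x] by (simp add: power2_eq_square algebra_simps)
  thus ?thesis by simp
qed

lemma tr_nonzero:
  assumes "card (UNIV::'a::{field,finite} set) = 2 ^ n" and "n \<ge> 1"
  shows "\<exists>c::'a. tr n c = 1"
proof (rule ccontr)
  assume "\<not> ?thesis"
  hence z: "\<forall>c::'a. tr n c = 0" using tr01[OF assms(1)] by blast
  define p :: "'a poly" where "p = (\<Sum>i<n. monom 1 (2^i))"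
  have pe: "poly p x = tr n x" for x by (simp add: p_def poly_sum poly_monom tr_def)
  have "coeff p (2^(n-1)) = (\<Sum>i<n. if 2^(n-1) = (2::nat)^i then 1 else 0)"
    by (simp add: p_def coeff_sum coeff_monom)
  also have "\<dots> = (\<Sum>i\<in>{n-1}. 1)"
    by (rule sum.mono_neutral_cong_right) (use assms(2) in auto)
  finally have "p \<noteq> 0" by auto
  hence r: "card {x. poly p x = 0} \<le> degree p" by (rule card_poly_roots_bound)
  have u: "{x. poly p x = 0} = UNIV" using z pe by auto
  have d: "degree p \<le> 2^(n-1)" unfolding p_def
    by (rule degree_sum_le) (auto intro: order.trans[OF degree_monom_le])
  have "(2::nat)^n \<le> 2^(n-1)" using r d assms(1) unfolding u by linarith
  moreover have "(2::nat)^(n-1) < 2^n" using assms(2) by simp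
  ultimately show False by linarith
qed

definition chi :: "nat \<Rightarrow> 'a::{field,finite} \<Rightarrow> int" where
  "chi n t = (if tr n t = 0 then 1 else -1)"

definition sb :: "bool \<Rightarrow> int" where "sb b = (if b then -1 else 1)"

lemma walsh_alt: "walsh n f a = (\<Sum>x\<in>UNIV. sb (f x) * chi n (a * x))"
  unfolding walsh_def sb_def chi_def by simp

lemma chi_add:
  assumes "card (UNIV::'a::{field,finite} set) = 2 ^ n"
  shows "chi n ((x::'a) + y) = chi n x * chi n y"
proof -
  note c = char2[OF assms]
  have "tr n (x + y) = tr n x + tr n y" by (rule tr_add[OF c])
  moreover have "(1::'a) \<noteq> 0" by simp
  ultimately show ?thesis using tr01[OF assms, of x] tr01[OF assms, of y] c
    unfolding chi_def by auto
qed

lemma tr_zero: "tr n (0::'a::{field,finite}) = 0"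
  unfolding tr_def by (simp add: zero_power)

lemma chi_sum:
  assumes "card (UNIV::'a::{field,finite} set) = 2 ^ n" and "n \<ge> 1"
  shows "(\<Sum>a\<in>UNIV. chi n (a * (b::'a))) = (if b = 0 then int (card (UNIV::'a set)) else 0)"
proof (cases "b = 0")
  case True then show ?thesis by (simp add: chi_def tr_zero)
next
  case False
  obtain c :: 'a where c: "tr n c = 1" using tr_nonzero[OF assms] by blast
  have ch: "chi n c = -1" using c by (simp add: chi_def)
  let ?S = "\<Sum>y\<in>UNIV. chi n (y::'a)"
  have r1: "(\<Sum>a\<in>UNIV. chi n (a * b)) = ?S"
    by (rule sum.reindex_bij_witness[of _ "\<lambda>y. y / b" "\<lambda>a. a * b"]) (use False in auto)
  have "(\<Sum>y\<in>UNIV. chi n (y + c)) = ?S"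
    by (rule sum.reindex_bij_witness[of _ "\<lambda>y. y - c" "\<lambda>y. y + c"]) auto
  moreover have "(\<Sum>y\<in>UNIV. chi n (y + c)) = - ?S"
    by (simp add: chi_add[OF assms(1)] ch sum_negf)
  ultimately have "?S = 0" by simp
  thus ?thesis using r1 False by simp
qed

lemma sb_sq: "sb b * sb b = 1" by (simp add: sb_def)

lemma parseval:
  assumes "card (UNIV::'a::{field,finite} set) = 2 ^ n" and "n \<ge> 1"
  shows "(\<Sum>a\<in>UNIV. (walsh n f (a::'a))^2) = int (card (UNIV::'a set))^2"
proof -
  note c = char2[OF assms(1)]
  have eq0: "((x::'a) + y = 0) = (y = x)" for x y
    using add_self0[OF c, of x] by (metis add_left_cancel)
  have pt: "sb (f x) * chi n (a*x) * (sb (f y) * chi n (a*y)) = sb (f x) * sb (f y) * chi n (a*(x+y))"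
    for a x y :: 'a by (simp add: distrib_left chi_add[OF assms(1)])
  have "(\<Sum>a\<in>UNIV. (walsh n f (a::'a))^2)
     = (\<Sum>a\<in>UNIV. \<Sum>x\<in>UNIV. \<Sum>y\<in>UNIV. sb (f x) * sb (f y) * chi n (a * (x + y)))"
    by (simp only: walsh_alt power2_eq_square sum_product pt)
  also have "\<dots> = (\<Sum>x\<in>UNIV. \<Sum>a\<in>UNIV. \<Sum>y\<in>UNIV. sb (f x) * sb (f y) * chi n (a * (x + y)))"
    by (rule sum.swap)
  also have "\<dots> = (\<Sum>x\<in>UNIV. \<Sum>y\<in>UNIV. \<Sum>a\<in>UNIV. sb (f x) * sb (f y) * chi n (a * (x + y)))"
    by (rule sum.cong[OF refl], rule sum.swap)
  also have "\<dots> = (\<Sum>x\<in>UNIV. \<Sum>y\<in>UNIV. sb (f x) * sb (f y) * (\<Sum>a\<in>UNIV. chi n (a * (x + y))))"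
    by (simp only: sum_distrib_left)
  also have "\<dots> = (\<Sum>x\<in>UNIV. \<Sum>y\<in>UNIV. if y = (x::'a) then int (card (UNIV::'a set)) else 0)"
  proof -
    have "sb (f x) * sb (f y) * (\<Sum>a\<in>UNIV. chi n (a * (x + y))) = (if y = x then int (card (UNIV::'a set)) else 0)" for x y :: 'a
      by (simp add: chi_sum[OF assms] eq0 sb_sq)
    thus ?thesis by (simp only:)
  qed
  also have "\<dots> = int (card (UNIV::'a set))^2" by (simp add: power2_eq_square)
  finally show ?thesis .
qed

lemma bent_walsh:
  assumes "bent n f"
  shows "walsh n f a = (if dual n f a then -(2 ^ (n div 2)) else 2 ^ (n div 2))"
proof -
  have "\<bar>walsh n f a\<bar> = 2 ^ (n div 2)" using assms unfolding bent_def by blast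
  thus ?thesis unfolding dual_def by (auto simp: abs_if split: if_splits)
qed

lemma sigma_pt:
  "2 * sb (bxor (bxor (bmul f1 f2) (bmul f1 f3)) (bmul f2 f3) x)
   = sb (f1 x) + sb (f2 x) + sb (f3 x) - sb (bxor (bxor f1 f2) f3 x)"
  by (cases "f1 x"; cases "f2 x"; cases "f3 x") (simp_all add: sb_def bxor_def bmul_def)

lemma sigma_walsh:
  "2 * walsh n (bxor (bxor (bmul f1 f2) (bmul f1 f3)) (bmul f2 f3)) a
   = walsh n f1 a + walsh n f2 a + walsh n f3 a - walsh n (bxor (bxor f1 f2) f3) a"
proof -
  have "2 * walsh n (bxor (bxor (bmul f1 f2) (bmul f1 f3)) (bmul f2 f3)) a
     = (\<Sum>x\<in>UNIV. 2 * sb (bxor (bxor (bmul f1 f2) (bmul f1 f3)) (bmul f2 f3) x) * chi n (a * x))"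
    by (simp add: walsh_alt sum_distrib_left mult.assoc)
  also have "\<dots> = (\<Sum>x\<in>UNIV. sb (f1 x) * chi n (a * x) + sb (f2 x) * chi n (a * x)
        + sb (f3 x) * chi n (a * x) - sb (bxor (bxor f1 f2) f3 x) * chi n (a * x))"
  proof -
    have "2 * sb (bxor (bxor (bmul f1 f2) (bmul f1 f3)) (bmul f2 f3) x) * chi n (a * x)
      = sb (f1 x) * chi n (a * x) + sb (f2 x) * chi n (a * x)
        + sb (f3 x) * chi n (a * x) - sb (bxor (bxor f1 f2) f3 x) * chi n (a * x)" for x
      unfolding sigma_pt by (simp add: algebra_simps)
    thus ?thesis by (simp only:)
  qed
  also have "\<dots> = walsh n f1 a + walsh n f2 a + walsh n f3 a - walsh n (bxor (bxor f1 f2) f3) a"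
    by (simp add: walsh_alt sum.distrib sum_subtractf)
  finally show ?thesis .
qed

lemma case_even:
  "\<not> ((((d1::bool) \<noteq> d2) \<noteq> d3) \<noteq> d4) \<Longrightarrow>
   sb d1 + sb d2 + sb d3 - sb d4 = 2 * sb (((d1 \<and> d2) \<noteq> (d1 \<and> d3)) \<noteq> (d2 \<and> d3))"
  by (cases d1; cases d2; cases d3; cases d4) (simp_all add: sb_def)

lemma case_odd:
  "((((d1::bool) \<noteq> d2) \<noteq> d3) \<noteq> d4) \<Longrightarrow>
   sb d1 + sb d2 + sb d3 - sb d4 \<in> {0, 4, -4}"
  by (cases d1; cases d2; cases d3; cases d4) (simp_all add: sb_def)

lemma abs_sq: "\<bar>x::int\<bar> = c \<Longrightarrow> x^2 = c*c"
  by (auto simp: abs_if power2_eq_square)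

theorem theorem2:
  fixes k :: nat
    and f1 f2 f3 :: "'a::{field,finite} \<Rightarrow> bool"
  assumes "k \<ge> 1"
    and "card (UNIV :: 'a set) = 2 ^ (2 * k)"
    and "f1 \<noteq> f2" and "f1 \<noteq> f3" and "f2 \<noteq> f3"
    and "bent (2 * k) f1" and "bent (2 * k) f2" and "bent (2 * k) f3"
    and "bent (2 * k) (bxor (bxor f1 f2) f3)"
  shows
    "let n = 2 * k; f4 = bxor (bxor f1 f2) f3;
         \<sigma> = bxor (bxor (bmul f1 f2) (bmul f1 f3)) (bmul f2 f3);
         D = bxor (bxor (bxor (dual n f1) (dual n f2)) (dual n f3)) (dual n f4)
     in (bent n \<sigma> \<longleftrightarrow> D = (\<lambda>_. False))
      \<and> (bent n \<sigma> \<longrightarrow> dual n \<sigma> = bxor (bxor (bmul (dual n f1) (dual n f2))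
                                     (bmul (dual n f1) (dual n f3))) (bmul (dual n f2) (dual n f3)))
      \<and> (semibent n \<sigma> \<longleftrightarrow> D = (\<lambda>_. True))
      \<and> (D \<noteq> (\<lambda>_. False) \<and> D \<noteq> (\<lambda>_. True) \<longrightarrow>
           (\<lambda>l. \<bar>walsh n \<sigma> l\<bar>) ` UNIV = {0, 2 ^ k, 2 ^ (k + 1)})"
proof -
  let ?n = "2*k"
  let ?f4 = "bxor (bxor f1 f2) f3"
  let ?s = "bxor (bxor (bmul f1 f2) (bmul f1 f3)) (bmul f2 f3)"
  let ?D = "bxor (bxor (bxor (dual ?n f1) (dual ?n f2)) (dual ?n f3)) (dual ?n ?f4)"
  let ?M = "bxor (bxor (bmul (dual ?n f1) (dual ?n f2)) (bmul (dual ?n f1) (dual ?n f3))) (bmul (dual ?n f2) (dual ?n f3))"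
  define h :: int where "h = 2^(k-1)"
  have hpos: "h > 0" unfolding h_def by simp
  have nd: "?n div 2 = k" by simp
  have q: "(2::int)^k = 2*h" unfolding h_def using assms(1)
    by (metis Suc_diff_1 less_le_trans power_Suc zero_less_one)
  have q1: "(2::int)^(k+1) = 4*h" using q by simp
  have W: "walsh ?n ?s a = h * (sb (dual ?n f1 a) + sb (dual ?n f2 a) + sb (dual ?n f3 a) - sb (dual ?n ?f4 a))" for a
  proof -
    have "2 * walsh ?n ?s a = 2 * (h * (sb (dual ?n f1 a) + sb (dual ?n f2 a) + sb (dual ?n f3 a) - sb (dual ?n ?f4 a)))"
      unfolding sigma_walsh bent_walsh[OF assms(6)] bent_walsh[OF assms(7)] bent_walsh[OF assms(8)]
        bent_walsh[OF assms(9)] nd q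
      by (simp add: sb_def algebra_simps)
    thus ?thesis by simp
  qed
  have Ev: "walsh ?n ?s a = 2*h * sb (?M a)" if "\<not> ?D a" for a
  proof -
    have "\<not> ((((dual ?n f1 a \<noteq> dual ?n f2 a) \<noteq> dual ?n f3 a) \<noteq> dual ?n ?f4 a))"
      using that by (simp add: bxor_def)
    from case_even[OF this] show ?thesis unfolding W by (simp add: bxor_def bmul_def)
  qed
  have Od: "walsh ?n ?s a \<in> {0, 4*h, -4*h}" if "?D a" for a
  proof -
    have "((((dual ?n f1 a \<noteq> dual ?n f2 a) \<noteq> dual ?n f3 a) \<noteq> dual ?n ?f4 a))"
      using that by (simp add: bxor_def)
    from case_odd[OF this] show ?thesis unfolding W by auto
  qed
  have sbv: "sb b = 1 \<or> sb b = -1" for b by (simp add: sb_def)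
  have P1: "bent ?n ?s \<longleftrightarrow> ?D = (\<lambda>_. False)"
  proof
    assume b: "bent ?n ?s"
    show "?D = (\<lambda>_. False)"
    proof
      fix a
      show "?D a = False"
      proof (rule ccontr)
        assume "?D a \<noteq> False"
        hence "?D a" by simp
        from Od[OF this] have "\<bar>walsh ?n ?s a\<bar> \<in> {0, 4*h}" using hpos by auto
        moreover have "\<bar>walsh ?n ?s a\<bar> = 2*h" using b nd q unfolding bent_def by simp
        ultimately show False using hpos by auto
      qed
    qed
  next
    assume "?D = (\<lambda>_. False)"
    hence "\<not> ?D a" for a by simp
    hence "\<bar>walsh ?n ?s a\<bar> = 2*h" for a using Ev sbv[of "?M a"] hpos by auto
    thus "bent ?n ?s" unfolding bent_def nd q by simp
  qed
  have P2: "bent ?n ?s \<longrightarrow> dual ?n ?s = ?M"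
  proof
    assume "bent ?n ?s"
    hence nD: "\<not> ?D a" for a using P1 by simp
    show "dual ?n ?s = ?M"
    proof
      fix a
      show "dual ?n ?s a = ?M a"
        unfolding dual_def nd q Ev[OF nD] using hpos by (simp add: sb_def)
    qed
  qed
  have P3: "semibent ?n ?s \<longleftrightarrow> ?D = (\<lambda>_. True)"
  proof
    assume b: "semibent ?n ?s"
    show "?D = (\<lambda>_. True)"
    proof
      fix a
      show "?D a = True"
      proof (rule ccontr)
        assume "?D a \<noteq> True"
        hence "\<not> ?D a" by simp
        from Ev[OF this] sbv[of "?M a"] have "\<bar>walsh ?n ?s a\<bar> = 2*h" using hpos by auto
        moreover have "walsh ?n ?s a \<in> {0, 4*h, -4*h}" using b q1 nd unfolding semibent_def by simp
        ultimately show False using hpos by auto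
      qed
    qed
  next
    assume "?D = (\<lambda>_. True)"
    hence "?D a" for a by simp
    thus "semibent ?n ?s" unfolding semibent_def nd q1 using Od by simp
  qed
  have P4: "(\<lambda>l. \<bar>walsh ?n ?s l\<bar>) ` UNIV = {0, 2 ^ k, 2 ^ (k + 1)}"
    if nF: "?D \<noteq> (\<lambda>_. False)" and nT: "?D \<noteq> (\<lambda>_. True)"
  proof -
    obtain a0 where a0: "?D a0" using nF by auto
    obtain a1 where a1: "\<not> ?D a1" using nT by auto
    have vals: "\<bar>walsh ?n ?s a\<bar> \<in> {0, 2*h, 4*h}" for a
    proof (cases "?D a")
      case True thus ?thesis using Od[OF True] hpos by auto
    next
      case False thus ?thesis using Ev[OF False] sbv[of "?M a"] hpos by auto
    qed
    have cardi: "int (card (UNIV::'a set)) = 4*h*h"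
    proof -
      have "int (card (UNIV::'a set)) = (2::int)^k * 2^k" using assms(2) by (simp add: power_add[symmetric] mult_2)
      thus ?thesis using q by simp
    qed
    have pars: "(\<Sum>a\<in>UNIV. (walsh ?n ?s a)^2) = (\<Sum>a\<in>(UNIV::'a set). 4*h*h) "
    proof -
      have "(\<Sum>a\<in>UNIV. (walsh ?n ?s a)^2) = int (card (UNIV::'a set))^2"
        by (rule parseval) (use assms(1,2) in auto)
      also have "\<dots> = (\<Sum>a\<in>(UNIV::'a set). 4*h*h)" using cardi by (simp add: power2_eq_square)
      finally show ?thesis .
    qed
    have ex0: "\<exists>a. walsh ?n ?s a = 0"
    proof (rule ccontr)
      assume na: "\<not> ?thesis"
      have ge: "4*h*h \<le> (walsh ?n ?s a)^2" for a
      proof -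
        have "\<bar>walsh ?n ?s a\<bar> \<in> {2*h, 4*h}" using vals[of a] na by auto
        hence "(walsh ?n ?s a)^2 \<in> {2*h*(2*h), 4*h*(4*h)}"
          using abs_sq[of "walsh ?n ?s a"] by blast
        moreover have "0 < h*h" using hpos by simp
        ultimately show ?thesis by (auto simp: algebra_simps)
      qed
      have "walsh ?n ?s a0 \<in> {4*h, -4*h}" using Od[OF a0] na by auto
      hence gt: "4*h*h < (walsh ?n ?s a0)^2" using hpos by (auto simp: power2_eq_square)
      have "(\<Sum>a\<in>(UNIV::'a set). 4*h*h) < (\<Sum>a\<in>UNIV. (walsh ?n ?s a)^2)"
        by (rule sum_strict_mono_ex1) (use ge gt in auto)
      thus False using pars by simp
    qed
    have ex4: "\<exists>a. \<bar>walsh ?n ?s a\<bar> = 4*h"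
    proof (rule ccontr)
      assume na: "\<not> ?thesis"
      have le: "(walsh ?n ?s a)^2 \<le> 4*h*h" for a
      proof -
        have "\<bar>walsh ?n ?s a\<bar> \<in> {0, 2*h}" using vals[of a] na by auto
        hence "(walsh ?n ?s a)^2 \<in> {0*0, 2*h*(2*h)}"
          using abs_sq[of "walsh ?n ?s a"] by blast
        moreover have "0 < h*h" using hpos by simp
        ultimately show ?thesis by (auto simp: algebra_simps)
      qed
      have "walsh ?n ?s a0 = 0" using Od[OF a0] na[unfolded not_ex, rule_format, of a0] hpos by auto
      hence lt: "(walsh ?n ?s a0)^2 < 4*h*h" using hpos by (auto simp: power2_eq_square)
      have "(\<Sum>a\<in>UNIV. (walsh ?n ?s a)^2) < (\<Sum>a\<in>(UNIV::'a set). 4*h*h)"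
        by (rule sum_strict_mono_ex1) (use le lt in auto)
      thus False using pars by simp
    qed
    have ex2: "\<bar>walsh ?n ?s a1\<bar> = 2*h" using Ev[OF a1] sbv[of "?M a1"] hpos by auto
    show ?thesis unfolding q q1
    proof
      show "(\<lambda>l. \<bar>walsh ?n ?s l\<bar>) ` UNIV \<subseteq> {0, 2*h, 4*h}" using vals by blast
    next
      show "{0, 2*h, 4*h} \<subseteq> (\<lambda>l. \<bar>walsh ?n ?s l\<bar>) ` UNIV"
        using ex0 ex4 ex2 by (auto simp: image_iff) (metis abs_zero, metis)
    qed
  qed
  show ?thesis unfolding Let_def using P1 P2 P3 P4 by blast
qed

end
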